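(* Let $N>2$ be an odd positive integer, $K$ a positive integer, and $0<Z_x\le N$, $0<Z_y\le K$ integers. Let $f:\mathbb{Z}_N\to\mathbb{Z}_K$ be such that for all integers $a,b$ with $-Z_x<a<Z_x$, $a\ne0$, $-Z_y<b<Z_y$, the equation $f(x+a)-f(x)=b$ (with $x+a$ computed in $\mathbb{Z}_N$ and the equation in $\mathbb{Z}_K$) has at most one solution $x\in\mathbb{Z}_N$. For $0\le k<N$ let $\mathbf{a}_k=(a_k(0),\dots,a_k(K-1))$ with $a_k(t)=\omega_K^{tf(k)}$. Let $\mathbf{h}_0,\dots,\mathbf{h}_{N-1}$ be unimodular complex sequences of length $N$ such that for all $0\le i\ne j<N$ and all $0\le v<N$, $$\Big|\sum_{n=0}^{N-1}h_i(n)h_j^*(n)\Big|\le 1,\qquad \Big|\sum_{n=0}^{N-1}h_i(n)h_j^*(n)\omega_N^{nv}\Big|<N.$$ For $0\le i<N$ define $\mathbf{s}_i$ of length $NK$ by $s_i(tN+k)=h_i(k)a_k(t)$ for $0\le t<K$, $0\le k<N$, and let $\mathcal{S}=\{\mathbf{s}_0,\dots,\mathbf{s}_{N-1}\}$. Then $\mathcal{S}$ is a polyphase periodic $(N,NK,\Pi,K)$-LAZ sequence set with $\Pi=(-Z_x,Z_x)\times(-Z_y,Z_y)$; that is, for all integers $(\tau,v)\in\Pi$: $|AF_{\mathbf{s}_i}(\tau,v)|\le K$ for every $i$ whenever $(\tau,v)\neq(0,0)$, and $|AF_{\mathbf{s}_i,\mathbf{s}_j}(\tau,v)|\le K$ for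 all $i\neq j$.
   Context: $\omega_L=e^{2\pi\sqrt{-1}/L}$, $z^*$ is complex conjugation, and a sequence is unimodular if all entries have modulus 1. For sequences $\mathbf{a},\mathbf{b}$ of length $L$, the periodic cross-ambiguity function is $AF_{\mathbf{a},\mathbf{b}}(\tau,v)=\sum_{t=0}^{L-1}a(t)b^*(\langle t+\tau\rangle_L)\omega_L^{vt}$ ($\langle\cdot\rangle_L$ = reduction mod $L$), and $AF_{\mathbf{a}}=AF_{\mathbf{a},\mathbf{a}}$. A set of $M$ sequences of length $L$ is an $(M,L,\Pi,\theta)$-LAZ periodic sequence set if the maximum of $|AF_{\mathbf{a}}(\tau,v)|$ over sequences $\mathbf{a}$ in the set and $(0,0)\ne(\tau,v)\in\Pi$, and of $|AF_{\mathbf{a},\mathbf{b}}(\tau,v)|$ over distinct $\mathbf{a},\mathbf{b}$ in the set and $(\tau,v)\in\Pi$, is $\theta$ (here: at most $\theta$). *)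

theory Defs
  imports "HOL-Analysis.Analysis"
begin

definition omega_pow :: "nat \<Rightarrow> int \<Rightarrow> complex" where
  "omega_pow L e = cis (2 * pi * of_int e / of_nat L)"

definition modL :: "nat \<Rightarrow> int \<Rightarrow> nat" where
  "modL L x = nat (x mod int L)"

definition AF :: "nat \<Rightarrow> (nat \<Rightarrow> complex) \<Rightarrow> (nat \<Rightarrow> complex) \<Rightarrow> int \<Rightarrow> int \<Rightarrow> complex" where
  "AF L a b \<tau> v = (\<Sum>t<L. a t * cnj (b (modL L (int t + \<tau>))) * omega_pow L (v * int t))"

definition seqA :: "nat \<Rightarrow> (nat \<Rightarrow> nat) \<Rightarrow> nat \<Rightarrow> nat \<Rightarrow> complex" where
  "seqA K f k t = omega_pow K (int t * int (f k))"

definition seqS :: "nat \<Rightarrow> nat \<Rightarrow> (nat \<Rightarrow> nat) \<Rightarrow> (nat \<Rightarrow> nat \<Rightarrow> complex) \<Rightarrow> nat \<Rightarrow> nat \<Rightarrow> complex" where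
  "seqS N K f h i m = h i (m mod N) * seqA K f (m mod N) (m div N)"

end

theory Submission
  imports Defs
begin

lemma op_add: "omega_pow L (a + b) = omega_pow L a * omega_pow L b"
  by (simp add: omega_pow_def cis_mult add_divide_distrib distrib_left)

lemma op_mult_L: "L > 0 \<Longrightarrow> omega_pow L (int L * z) = 1"
proof -
  assume "L > 0"
  then have "2 * pi * of_int (int L * z) / of_nat L = 2 * pi * real_of_int z" by simp
  then show ?thesis unfolding omega_pow_def using cis_multiple_2pi[of "real_of_int z"] by simp
qed

lemma op_cnj: "cnj (omega_pow L a) = omega_pow L (- a)"
  by (simp add: omega_pow_def cis_cnj)

lemma op_norm: "cmod (omega_pow L a) = 1"
  by (simp add: omega_pow_def)

lemma op_NK: "N > 0 \<Longrightarrow> omega_pow (N * K) (int N * a) = omega_pow K a"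
  by (simp add: omega_pow_def algebra_simps)

lemma op_mod: "L > 0 \<Longrightarrow> omega_pow L (a mod int L * b) = omega_pow L (a * b)"
proof -
  assume L: "L > 0"
  have "a mod int L * b + int L * (a div int L * b) = (int L * (a div int L) + a mod int L) * b"
    by (simp only: distrib_right mult.assoc add.commute)
  also have "\<dots> = a * b" by (simp only: mult_div_mod_eq)
  finally have "a * b = a mod int L * b + int L * (a div int L * b)" by simp
  then show ?thesis using op_add[of L "a mod int L * b" "int L * (a div int L * b)"] op_mult_L[OF L] by simp
qed

lemma op_pow: "omega_pow L (int t * e) = (omega_pow L e) ^ t"
proof (induction t)
  case 0 then show ?case by (simp add: omega_pow_def)
next
  case (Suc t)
  have "int (Suc t) * e = e + int t * e" by (simp add: algebra_simps)
  then show ?case using Suc by (simp add: op_add)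
qed

lemma op_eq1: "L > 0 \<Longrightarrow> omega_pow L e = 1 \<Longrightarrow> e mod int L = 0"
proof -
  assume L: "L > 0" and e: "omega_pow L e = 1"
  then have "cos (2 * pi * of_int e / of_nat L) = 1"
    unfolding omega_pow_def by (metis cis.sel(1) one_complex.sel(1))
  then obtain n :: int where n: "2 * pi * of_int e / of_nat L = real_of_int n * 2 * pi"
    using cos_one_2pi_int by blast
  then have "real_of_int e = real_of_int n * real L" using L by (simp add: field_simps)
  then have "e = n * int L" by (metis of_int_eq_iff of_int_mult of_int_of_nat_eq)
  then show ?thesis by simp
qed

lemma geo: "K > 0 \<Longrightarrow> (\<Sum>t<K. omega_pow K (int t * e)) = (if e mod int K = 0 then of_nat K else 0)"
proof -
  assume K: "K > 0"
  have "(\<Sum>t<K. omega_pow K (int t * e)) = (\<Sum>t<K. (omega_pow K e) ^ t)" by (simp add: op_pow)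
  also have "\<dots> = (if e mod int K = 0 then of_nat K else 0)"
  proof (cases "e mod int K = 0")
    case True
    then obtain q where "e = int K * q" by auto
    then have "omega_pow K e = 1" using op_mult_L[OF K] by simp
    then show ?thesis using True by simp
  next
    case False
    then have ne: "omega_pow K e \<noteq> 1" using op_eq1[OF K] by blast
    have "(omega_pow K e) ^ K = 1" using op_pow[of K K e] op_mult_L[OF K, of e]
      by simp
    then show ?thesis using ne False by (simp add: sum_gp_strict)
  qed
  finally show ?thesis .
qed

lemma op_comb: "A + B + D = E + F \<Longrightarrow> omega_pow L A * omega_pow L B * omega_pow L D = omega_pow L E * omega_pow L F"
  by (metis op_add)

lemma cond_iff: "K > 0 \<Longrightarrow> ((a - b + v) mod int K = 0) = ((b - a) mod int K = v mod int K)"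
proof -
  have "((a - b + v) mod int K = 0) = (int K dvd (a - b + v))" by auto
  also have "\<dots> = (int K dvd ((b - a) - v))"
  proof -
    have "a - b + v = - ((b - a) - v)" by simp
    then show ?thesis by (simp only: dvd_minus_iff)
  qed
  also have "\<dots> = ((b - a) mod int K = v mod int K)" by (simp add: mod_eq_dvd_iff)
  finally show ?thesis .
qed

lemma term_eq:
  fixes \<tau> v :: int and f :: "nat \<Rightarrow> nat" and h :: "nat \<Rightarrow> nat \<Rightarrow> complex"
  assumes N: "N > 0" and K: "K > 0" and t: "t < K" and k: "k < N"
  defines "kp \<equiv> modL N (int k + \<tau>)" and "c \<equiv> (int k + \<tau>) div int N"
  shows "seqS N K f h i (k + t * N) * cnj (seqS N K f h j (modL (N * K) (int (k + t * N) + \<tau>)))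
           * omega_pow (N * K) (v * int (k + t * N))
       = (h i k * cnj (h j kp) * omega_pow K (- (c * int (f kp))) * omega_pow (N * K) (v * int k))
           * omega_pow K (int t * (int (f k) - int (f kp) + v))"
proof -
  define a where "a = int (k + t * N) + \<tau>"
  define x where "x = a mod int (N * K)"
  have x0: "0 \<le> x" unfolding x_def using N K by simp
  have m1: "(k + t * N) mod N = k" using k by simp
  have m2: "(k + t * N) div N = t" using k N by simp
  have a_eq: "a = (int k + \<tau>) + int t * int N" unfolding a_def by simp
  have xmodN: "x mod int N = (int k + \<tau>) mod int N"
  proof -
    have "x mod int N = a mod int N" unfolding x_def
      by (simp add: mod_mod_cancel)
    also have "\<dots> = (int k + \<tau>) mod int N" unfolding a_eq by simp
    finally show ?thesis .
  qed
  have xdivN: "x div int N = (int t + c) mod int K"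
  proof -
    have "x = int N * (a div int N mod int K) + a mod int N"
      unfolding x_def using zmod_zmult2_eq[of "int K" a "int N"] by simp
    then have "x div int N = a div int N mod int K" using N
      by (simp add: div_add1_eq)
    also have "a div int N = int t + c" unfolding a_eq c_def using N by simp
    finally show ?thesis .
  qed
  have r1: "modL (N * K) (int (k + t * N) + \<tau>) mod N = kp"
    unfolding modL_def kp_def a_def[symmetric] x_def[symmetric]
    using x0 N xmodN nat_mod_distrib[of x "int N"] by simp
  have r2: "modL (N * K) (int (k + t * N) + \<tau>) div N = nat ((int t + c) mod int K)"
    unfolding modL_def a_def[symmetric] x_def[symmetric]
    using x0 N xdivN nat_div_distrib[of x "int N"] by simp
  have A: "seqA K f kp (nat ((int t + c) mod int K)) = omega_pow K ((int t + c) * int (f kp))"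
    unfolding seqA_def using K by (simp add: op_mod)
  have V: "omega_pow (N * K) (v * int (k + t * N)) = omega_pow (N * K) (v * int k) * omega_pow K (v * int t)"
  proof -
    have "v * int (k + t * N) = v * int k + int N * (v * int t)" by (simp add: algebra_simps)
    then show ?thesis using op_add op_NK[OF N] by metis
  qed
  have E: "omega_pow K (int t * int (f k)) * omega_pow K (- ((int t + c) * int (f kp))) * omega_pow K (v * int t)
     = omega_pow K (- (c * int (f kp))) * omega_pow K (int t * (int (f k) - int (f kp) + v))"
    by (rule op_comb) (simp add: algebra_simps)
  show ?thesis
  proof -
    have "h i k * seqA K f k t * cnj (h j kp * omega_pow K ((int t + c) * int (f kp))) *
      (omega_pow (N * K) (v * int k) * omega_pow K (v * int t))
      = (h i k * cnj (h j kp) * omega_pow (N * K) (v * int k)) *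
        (omega_pow K (int t * int (f k)) * omega_pow K (- ((int t + c) * int (f kp))) * omega_pow K (v * int t))"
      by (simp add: seqA_def op_cnj mult_ac)
    also have "\<dots> = (h i k * cnj (h j kp) * omega_pow K (- (c * int (f kp))) * omega_pow (N * K) (v * int k))
           * omega_pow K (int t * (int (f k) - int (f kp) + v))"
      unfolding E by (simp add: mult_ac)
    finally show ?thesis by (simp only: seqS_def m1 m2 r1 r2 A V)
  qed
qed


definition CC :: "nat \<Rightarrow> nat \<Rightarrow> (nat \<Rightarrow> nat) \<Rightarrow> (nat \<Rightarrow> nat \<Rightarrow> complex) \<Rightarrow> nat \<Rightarrow> nat \<Rightarrow> int \<Rightarrow> int \<Rightarrow> nat \<Rightarrow> complex" where
  "CC N K f h i j \<tau> v k = h i k * cnj (h j (modL N (int k + \<tau>)))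
     * omega_pow K (- (((int k + \<tau>) div int N) * int (f (modL N (int k + \<tau>))))) * omega_pow (N * K) (v * int k)"

lemma AF_formula:
  fixes \<tau> v :: int and f :: "nat \<Rightarrow> nat" and h :: "nat \<Rightarrow> nat \<Rightarrow> complex"
  assumes N: "N > 0" and K: "K > 0"
  shows "AF (N * K) (seqS N K f h i) (seqS N K f h j) \<tau> v = of_nat K *
    (\<Sum>k\<in>{x \<in> {0..<N}. (int (f (modL N (int x + \<tau>))) - int (f x)) mod int K = v mod int K}. CC N K f h i j \<tau> v k)"
proof -
  define T where "T m = seqS N K f h i m * cnj (seqS N K f h j (modL (N * K) (int m + \<tau>))) * omega_pow (N * K) (v * int m)" for m
  define e where "e k = int (f k) - int (f (modL N (int k + \<tau>))) + v" for k
  have "AF (N * K) (seqS N K f h i) (seqS N K f h j) \<tau> v = (\<Sum>m<K * N. T m)"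
    unfolding AF_def T_def by (simp add: mult.commute)
  also have "\<dots> = (\<Sum>t<K. \<Sum>k<N. T (k + t * N))" by (rule sum_mult_product)
  also have "\<dots> = (\<Sum>t<K. \<Sum>k<N. CC N K f h i j \<tau> v k * omega_pow K (int t * e k))"
    unfolding T_def CC_def e_def
    apply (intro sum.cong refl)
    apply (rule term_eq[OF N K])
    by auto
  also have "\<dots> = (\<Sum>k<N. CC N K f h i j \<tau> v k * (\<Sum>t<K. omega_pow K (int t * e k)))"
    by (subst sum.swap) (simp add: sum_distrib_left)
  also have "\<dots> = (\<Sum>k<N. CC N K f h i j \<tau> v k * (if e k mod int K = 0 then of_nat K else 0))"
    using geo[OF K] by simp
  also have "\<dots> = (\<Sum>k\<in>{0..<N}. if (int (f (modL N (int k + \<tau>))) - int (f k)) mod int K = v mod int K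
        then of_nat K * CC N K f h i j \<tau> v k else 0)"
    unfolding e_def using cond_iff[OF K] by (intro sum.cong) (auto simp: lessThan_atLeast0)
  also have "\<dots> = of_nat K *
    (\<Sum>k\<in>{x \<in> {0..<N}. (int (f (modL N (int x + \<tau>))) - int (f x)) mod int K = v mod int K}. CC N K f h i j \<tau> v k)"
    by (simp only: sum_distrib_left sum.inter_filter[OF finite_atLeastLessThan]) (intro sum.cong refl, simp)
  finally show ?thesis .
qed

lemma modL_lt: "N > 0 \<Longrightarrow> modL N x < N"
  unfolding modL_def by (simp add: nat_less_iff)

lemma AF_bound:
  fixes \<tau> v :: int and f :: "nat \<Rightarrow> nat" and h :: "nat \<Rightarrow> nat \<Rightarrow> complex"
  assumes N: "N > 0" and K: "K > 0" and i: "i < N" and j: "j < N"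
    and h_unimod: "\<forall>i<N. \<forall>n<N. cmod (h i n) = 1"
  shows "cmod (AF (N * K) (seqS N K f h i) (seqS N K f h j) \<tau> v) \<le> real K *
    card {x \<in> {0..<N}. (int (f (modL N (int x + \<tau>))) - int (f x)) mod int K = v mod int K}"
proof -
  let ?S = "{x \<in> {0..<N}. (int (f (modL N (int x + \<tau>))) - int (f x)) mod int K = v mod int K}"
  have c1: "cmod (CC N K f h i j \<tau> v k) = 1" if "k \<in> ?S" for k
  proof -
    have "k < N" using that by simp
    moreover have "modL N (int k + \<tau>) < N" using modL_lt[OF N] .
    ultimately show ?thesis unfolding CC_def using h_unimod i j by (simp add: norm_mult op_norm)
  qed
  have "cmod (\<Sum>k\<in>?S. CC N K f h i j \<tau> v k) \<le> (\<Sum>k\<in>?S. cmod (CC N K f h i j \<tau> v k))"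
    by (rule norm_sum)
  also have "\<dots> = real (card ?S)" using c1 by simp
  finally have "cmod (\<Sum>k\<in>?S. CC N K f h i j \<tau> v k) \<le> real (card ?S)" .
  then show ?thesis unfolding AF_formula[OF N K] norm_mult
    by (simp add: mult_left_mono)
qed

theorem theorem1:
  fixes N K :: nat and Zx Zy :: int
    and f :: "nat \<Rightarrow> nat" and h :: "nat \<Rightarrow> nat \<Rightarrow> complex"
  assumes N_odd: "odd N" and N_gt: "N > 2" and K_pos: "K > 0"
    and Zx: "0 < Zx" "Zx \<le> int N" and Zy: "0 < Zy" "Zy \<le> int K"
    and f_range: "\<forall>k<N. f k < K"
    and f_diff: "\<forall>a b. -Zx < a \<and> a < Zx \<and> a \<noteq> 0 \<and> -Zy < b \<and> b < Zy \<longrightarrow>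
        card {x \<in> {0..<N}. (int (f (modL N (int x + a))) - int (f x)) mod int K = b mod int K} \<le> 1"
    and h_unimod: "\<forall>i<N. \<forall>n<N. cmod (h i n) = 1"
    and h_corr: "\<forall>i<N. \<forall>j<N. i \<noteq> j \<longrightarrow>
        cmod (\<Sum>n<N. h i n * cnj (h j n)) \<le> 1"
    and h_dopp: "\<forall>i<N. \<forall>j<N. i \<noteq> j \<longrightarrow> (\<forall>v<N.
        cmod (\<Sum>n<N. h i n * cnj (h j n) * omega_pow N (int n * int v)) < real N)"
  shows "\<forall>\<tau> v. -Zx < \<tau> \<and> \<tau> < Zx \<and> -Zy < v \<and> v < Zy \<longrightarrow>
           (\<forall>i<N. (\<tau>, v) \<noteq> (0, 0) \<longrightarrow>
              cmod (AF (N * K) (seqS N K f h i) (seqS N K f h i) \<tau> v) \<le> real K) \<and>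
           (\<forall>i<N. \<forall>j<N. i \<noteq> j \<longrightarrow>
              cmod (AF (N * K) (seqS N K f h i) (seqS N K f h j) \<tau> v) \<le> real K)"
  proof (intro allI impI conjI)
  fix \<tau> v :: int
  assume b: "-Zx < \<tau> \<and> \<tau> < Zx \<and> -Zy < v \<and> v < Zy"
  have N: "N > 0" using N_gt by simp
  let ?S = "{x \<in> {0..<N}. (int (f (modL N (int x + \<tau>))) - int (f x)) mod int K = v mod int K}"
  have cardS: "card ?S \<le> 1" if nz: "(\<tau>, v) \<noteq> (0, 0)"
  proof (cases "\<tau> = 0")
    case True
    then have v0: "v \<noteq> 0" using nz by simp
    have "?S = {}"
    proof (rule ccontr)
      assume "?S \<noteq> {}"
      then obtain x where x: "x \<in> ?S" by blast
      then have "modL N (int x + \<tau>) = x" using True unfolding modL_def by simp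
      then have "v mod int K = 0" using x by simp
      then have "int K dvd v" by auto
      then have "\<bar>int K\<bar> \<le> \<bar>v\<bar>" using v0 dvd_imp_le_int by blast
      then show False using b Zy by linarith
    qed
    then show ?thesis by (metis card.empty zero_le_one)
  next
    case False
    then show ?thesis using f_diff b by blast
  qed
  show "cmod (AF (N * K) (seqS N K f h i) (seqS N K f h i) \<tau> v) \<le> real K"
    if "i < N" "(\<tau>, v) \<noteq> (0, 0)" for i
  proof -
    have "cmod (AF (N * K) (seqS N K f h i) (seqS N K f h i) \<tau> v) \<le> real K * card ?S"
      using AF_bound[OF N K_pos that(1) that(1) h_unimod] .
    also have "\<dots> \<le> real K * 1" using cardS[OF that(2)] by (intro mult_left_mono) auto
    finally show ?thesis by simp
  qed
  show "cmod (AF (N * K) (seqS N K f h i) (seqS N K f h j) \<tau> v) \<le> real K"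
    if ij: "i < N" "j < N" "i \<noteq> j" for i j
  proof (cases "(\<tau>, v) = (0, 0)")
    case False
    have "cmod (AF (N * K) (seqS N K f h i) (seqS N K f h j) \<tau> v) \<le> real K * card ?S"
      using AF_bound[OF N K_pos ij(1) ij(2) h_unimod] .
    also have "\<dots> \<le> real K * 1" using cardS[OF False] by (intro mult_left_mono) auto
    finally show ?thesis by simp
  next
    case True
    then have t0: "\<tau> = 0" and v0: "v = 0" by auto
    have S: "?S = {0..<N}" unfolding t0 v0 modL_def by auto
    have C: "CC N K f h i j \<tau> v k = h i k * cnj (h j k)" if "k \<in> {0..<N}" for k
      using that unfolding CC_def t0 v0 modL_def by (simp add: omega_pow_def)
    have "AF (N * K) (seqS N K f h i) (seqS N K f h j) \<tau> v = of_nat K * (\<Sum>k\<in>{0..<N}. h i k * cnj (h j k))"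
      unfolding AF_formula[OF N K_pos] S using C by simp
    also have "(\<Sum>k\<in>{0..<N}. h i k * cnj (h j k)) = (\<Sum>n<N. h i n * cnj (h j n))"
      by (simp add: lessThan_atLeast0)
    finally have "cmod (AF (N * K) (seqS N K f h i) (seqS N K f h j) \<tau> v) = real K * cmod (\<Sum>n<N. h i n * cnj (h j n))"
      by (simp add: norm_mult)
    also have "\<dots> \<le> real K * 1" using h_corr ij by (intro mult_left_mono) auto
    finally show ?thesis by simp
  qed
qed

end
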